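(* For every $k$-regular graph $G$, $\mu(G)\ge k/2$.
   Context: All graphs are finite and simple. For a graph $G=(V,E)$ on $n$ vertices, a fractional vertex cover is a function $f:V\to[0,\infty)$ with $f(u)+f(v)\ge 1$ for every edge $uv\in E$; $\tau^*(G)$ denotes the minimum of $\sum_{v\in V}f(v)$ over all fractional vertex covers. For $E'\subseteq E$ let $G-E'=(V,E\setminus E')$. Define $\mu(G)=\min\{|E'| : E'\subseteq E,\ \tau^*(G-E')<n/2\}$. *)

theory Defs
  imports Complex_Main
begin

definition simple_graph :: "'a set \<Rightarrow> 'a set set \<Rightarrow> bool" where
  "simple_graph V E \<longleftrightarrow> finite V \<and> (\<forall>e\<in>E. e \<subseteq> V \<and> card e = 2)"

definition degree :: "'a set set \<Rightarrow> 'a \<Rightarrow> nat" where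
  "degree E v = card {e\<in>E. v \<in> e}"

definition regular :: "'a set \<Rightarrow> 'a set set \<Rightarrow> nat \<Rightarrow> bool" where
  "regular V E k \<longleftrightarrow> (\<forall>v\<in>V. degree E v = k)"

definition frac_vertex_cover :: "'a set \<Rightarrow> 'a set set \<Rightarrow> ('a \<Rightarrow> real) \<Rightarrow> bool" where
  "frac_vertex_cover V E f \<longleftrightarrow>
     (\<forall>v\<in>V. 0 \<le> f v) \<and> (\<forall>u v. {u, v} \<in> E \<longrightarrow> f u + f v \<ge> 1)"

text \<open>Fractional vertex cover number (the minimum is attained; we take the infimum).\<close>
definition tau_star :: "'a set \<Rightarrow> 'a set set \<Rightarrow> real" where
  "tau_star V E = Inf {(\<Sum>v\<in>V. f v) | f. frac_vertex_cover V E f}"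

definition mu :: "'a set \<Rightarrow> 'a set set \<Rightarrow> nat" where
  "mu V E = Inf {card E' | E'. E' \<subseteq> E \<and> tau_star V (E - E') < real (card V) / 2}"

end

theory Submission imports Defs begin

lemma pair_lemma:
  fixes f :: "'a \<Rightarrow> real"
  shows "finite S \<Longrightarrow> finite T \<Longrightarrow> S \<inter> T = {} \<Longrightarrow> \<forall>u\<in>S. f u < 1/2 \<Longrightarrow> \<forall>v\<in>T. f v \<ge> 1/2
    \<Longrightarrow> \<forall>t<1/2. card {u\<in>S. f u \<le> t} \<le> card {v\<in>T. f v \<ge> 1 - t}
    \<Longrightarrow> sum f (S \<union> T) \<ge> (real (card S) + real (card T)) / 2"
proof (induction "card S" arbitrary: S T rule: less_induct)
  case less
  show ?case
  proof (cases "S = {}")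
    case True
    have "sum (\<lambda>_. 1/2) T \<le> sum f T" using less.prems by (intro sum_mono) auto
    then show ?thesis using True by simp
  next
    case False
    define m where "m = Min (f ` S)"
    have "m \<in> f ` S" unfolding m_def using False less.prems by auto
    then obtain u where u: "u \<in> S" "f u = m" by auto
    have umin: "\<forall>w\<in>S. f u \<le> f w" using u less.prems(1) unfolding m_def by auto
    have "card {w\<in>S. f w \<le> f u} \<le> card {v\<in>T. f v \<ge> 1 - f u}" using less.prems u by auto
    moreover have "card {w\<in>S. f w \<le> f u} \<ge> 1"
    proof -
      have "{w\<in>S. f w \<le> f u} \<noteq> {}" using u by auto
      then show ?thesis using less.prems(1) by (simp add: Suc_le_eq card_gt_0_iff)
    qed
    ultimately have "{v\<in>T. f v \<ge> 1 - f u} \<noteq> {}" by (metis card.empty le_zero_eq one_neq_zero)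
    then obtain w where w: "w \<in> T" "f w \<ge> 1 - f u" by auto
    define M where "M = Max (f ` T)"
    have "M \<in> f ` T" unfolding M_def using w less.prems(2) by (intro Max_in) auto
    then obtain v where v: "v \<in> T" "f v = M" by auto
    have vmax: "\<forall>x\<in>T. f x \<le> f v" using v less.prems(2) unfolding M_def by auto
    have uv: "f u + f v \<ge> 1" using vmax w by force
    define S' where "S' = S - {u}"
    define T' where "T' = T - {v}"
    have cS: "card S' < card S" unfolding S'_def using u less.prems(1) by (metis card_Diff1_less)
    have cond: "\<forall>t<1/2. card {x\<in>S'. f x \<le> t} \<le> card {x\<in>T'. f x \<ge> 1 - t}"
    proof (intro allI impI)
      fix t :: real assume t: "t < 1/2"
      show "card {x\<in>S'. f x \<le> t} \<le> card {x\<in>T'. f x \<ge> 1 - t}"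
      proof (cases "f u \<le> t")
        case True
        have e1: "{x\<in>S. f x \<le> t} = insert u {x\<in>S'. f x \<le> t}" using True u unfolding S'_def by auto
        have c1: "card {x\<in>S. f x \<le> t} = Suc (card {x\<in>S'. f x \<le> t})"
          unfolding e1 using less.prems(1) unfolding S'_def by (subst card_insert_disjoint) auto
        have e2: "{x\<in>T. f x \<ge> 1 - t} \<subseteq> insert v {x\<in>T'. f x \<ge> 1 - t}" unfolding T'_def by auto
        have "card {x\<in>T. f x \<ge> 1 - t} \<le> card (insert v {x\<in>T'. f x \<ge> 1 - t})"
          using e2 less.prems(2) unfolding T'_def by (intro card_mono) auto
        also have "\<dots> \<le> Suc (card {x\<in>T'. f x \<ge> 1 - t})"
          using less.prems(2) unfolding T'_def by (simp add: card_insert_le_m1 card_insert_if)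
        finally show ?thesis using c1 less.prems(6) t by force
      next
        case False
        then have "{x\<in>S'. f x \<le> t} = {}" using umin unfolding S'_def by force
        then show ?thesis by (simp only:) simp
      qed
    qed
    have IH: "sum f (S' \<union> T') \<ge> (real (card S') + real (card T')) / 2"
      using less.hyps[OF cS, of T'] less.prems cond unfolding S'_def T'_def by auto
    have split: "S \<union> T = insert u (insert v (S' \<union> T'))" using u v unfolding S'_def T'_def by auto
    have uv_ne: "u \<noteq> v" using u v less.prems(3) by auto
    have fin: "finite (S' \<union> T')" using less.prems unfolding S'_def T'_def by auto
    have "sum f (S \<union> T) = f u + f v + sum f (S' \<union> T')"
    proof -
      have "u \<notin> insert v (S' \<union> T')" using uv_ne u less.prems(3) unfolding S'_def T'_def by auto
      moreover have "v \<notin> S' \<union> T'" using v less.prems(3) unfolding S'_def T'_def by auto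
      ultimately show ?thesis unfolding split using fin by (simp add: sum.insert)
    qed
    moreover have "card S = Suc (card S')" using u less.prems(1) unfolding S'_def
      by (metis card_Suc_Diff1)
    moreover have "card T = Suc (card T')" using v less.prems(2) unfolding T'_def
      by (metis card_Suc_Diff1)
    ultimately show ?thesis using IH uv by simp
  qed
qed


lemma count_lemma:
  fixes f :: "'a \<Rightarrow> real"
  assumes sg: "simple_graph V E" and reg: "regular V E k" and sub: "E' \<subseteq> E"
    and fvc: "frac_vertex_cover V (E - E') f" and t: "t < 1/2"
  defines "A \<equiv> {u\<in>V. f u \<le> t}" and "B \<equiv> {v\<in>V. 1 - t \<le> f v}"
  shows "k * card A \<le> 2 * card E' + k * card B"
proof -
  have finV: "finite V" using sg unfolding simple_graph_def by auto
  have EV: "\<And>e. e \<in> E \<Longrightarrow> e \<subseteq> V \<and> card e = 2" using sg unfolding simple_graph_def by auto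
  have finE: "finite E"
  proof -
    have "E \<subseteq> Pow V" using EV by auto
    then show ?thesis using finV by (meson finite_Pow_iff finite_subset)
  qed
  have finE': "finite E'" using sub finE by (rule finite_subset)
  have finA: "finite A" "finite B" unfolding A_def B_def using finV by auto
  define H where "H = E - E'"
  have finH: "finite H" unfolding H_def using finE by auto
  have edge_other: "\<exists>w. e = {u, w} \<and> w \<noteq> u" if "e \<in> E" "u \<in> e" for e u
  proof -
    have "card e = 2" using EV that(1) by blast
    then obtain x y where "e = {x, y}" "x \<noteq> y" by (metis card_2_iff)
    then show ?thesis using that(2) by auto
  qed
  have deg: "degree E u = card {e\<in>E'. u \<in> e} + card {e\<in>H. u \<in> e}" for u
  proof -
    have "{e\<in>E. u \<in> e} = {e\<in>E'. u \<in> e} \<union> {e\<in>H. u \<in> e}" using sub unfolding H_def by auto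
    moreover have "{e\<in>E'. u \<in> e} \<inter> {e\<in>H. u \<in> e} = {}" unfolding H_def by auto
    ultimately show ?thesis unfolding degree_def using finE' finH
      by (simp add: card_Un_disjoint)
  qed
  have sumA: "(\<Sum>u\<in>A. degree E u) = k * card A"
    using reg unfolding regular_def A_def by simp
  have part1: "(\<Sum>u\<in>A. card {e\<in>E'. u \<in> e}) \<le> 2 * card E'"
  proof -
    have "(\<Sum>u\<in>A. card {e\<in>E'. u \<in> e}) = (\<Sum>u\<in>A. \<Sum>e\<in>E'. if u \<in> e then 1 else 0)"
      using finE' by (simp add: sum.If_cases Int_def)
    also have "\<dots> = (\<Sum>e\<in>E'. \<Sum>u\<in>A. if u \<in> e then 1 else 0)" by (rule sum.swap)
    also have "\<dots> = (\<Sum>e\<in>E'. card (A \<inter> e))"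
      using finA by (simp add: sum.If_cases Int_def)
    also have "\<dots> \<le> (\<Sum>e\<in>E'. 2)"
    proof (rule sum_mono)
      fix e assume "e \<in> E'"
      then have "card e = 2" using EV sub by auto
      then show "card (A \<inter> e) \<le> 2" using finA by (metis card_mono inf_le1 order_trans card_mono inf_le2 card.infinite zero_neq_numeral)
    qed
    finally show ?thesis by simp
  qed
  have part2: "(\<Sum>u\<in>A. card {e\<in>H. u \<in> e}) \<le> k * card B"
  proof -
    have disj: "\<forall>u\<in>A. \<forall>w\<in>A. u \<noteq> w \<longrightarrow> {e\<in>H. u \<in> e} \<inter> {e\<in>H. w \<in> e} = {}"
    proof (intro ballI impI)
      fix u w assume u: "u \<in> A" and w: "w \<in> A" and uw: "u \<noteq> w"
      show "{e\<in>H. u \<in> e} \<inter> {e\<in>H. w \<in> e} = {}"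
      proof (rule ccontr)
        assume "{e\<in>H. u \<in> e} \<inter> {e\<in>H. w \<in> e} \<noteq> {}"
        then obtain e where e: "e \<in> H" "u \<in> e" "w \<in> e" by auto
        then obtain x where x: "e = {u, x}" "x \<noteq> u" using edge_other unfolding H_def by blast
        then have "e = {u, w}" using e uw by auto
        then have "f u + f w \<ge> 1" using fvc e unfolding frac_vertex_cover_def H_def by auto
        moreover have "f u \<le> t" "f w \<le> t" using u w unfolding A_def by auto
        ultimately show False using t by linarith
      qed
    qed
    have "(\<Sum>u\<in>A. card {e\<in>H. u \<in> e}) = card (\<Union>u\<in>A. {e\<in>H. u \<in> e})"
      using finA finH disj by (subst card_UN_disjoint) auto
    also have "\<dots> \<le> card (\<Union>v\<in>B. {e\<in>E. v \<in> e})"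
    proof (rule card_mono)
      show "finite (\<Union>v\<in>B. {e\<in>E. v \<in> e})" by (rule finite_subset[OF _ finE]) auto
      show "(\<Union>u\<in>A. {e\<in>H. u \<in> e}) \<subseteq> (\<Union>v\<in>B. {e\<in>E. v \<in> e})"
      proof
        fix e assume "e \<in> (\<Union>u\<in>A. {e\<in>H. u \<in> e})"
        then obtain u where u: "u \<in> A" "e \<in> H" "u \<in> e" by auto
        then obtain w where x: "e = {u, w}" "w \<noteq> u" using edge_other unfolding H_def by blast
        then have "f u + f w \<ge> 1" using fvc u unfolding frac_vertex_cover_def H_def by auto
        moreover have "f u \<le> t" using u unfolding A_def by auto
        moreover have "w \<in> V" using EV u x unfolding H_def by auto
        ultimately have "w \<in> B" unfolding B_def by auto
        then show "e \<in> (\<Union>v\<in>B. {e\<in>E. v \<in> e})" using u x unfolding H_def by auto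
      qed
    qed
    also have "\<dots> \<le> (\<Sum>v\<in>B. card {e\<in>E. v \<in> e})" using finA by (intro card_UN_le) auto
    also have "\<dots> = k * card B" using reg unfolding regular_def degree_def B_def by simp
    finally show ?thesis .
  qed
  have "k * card A = (\<Sum>u\<in>A. card {e\<in>E'. u \<in> e}) + (\<Sum>u\<in>A. card {e\<in>H. u \<in> e})"
    using sumA deg by (simp add: sum.distrib)
  then show ?thesis using part1 part2 by linarith
qed


lemma cover_bound:
  fixes f :: "'a \<Rightarrow> real"
  assumes sg: "simple_graph V E" and reg: "regular V E k" and sub: "E' \<subseteq> E"
    and fvc: "frac_vertex_cover V (E - E') f" and m: "2 * card E' < k"
  shows "sum f V \<ge> real (card V) / 2"
proof -
  have finV: "finite V" using sg unfolding simple_graph_def by auto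
  define S where "S = {v\<in>V. f v < 1/2}"
  define T where "T = {v\<in>V. f v \<ge> 1/2}"
  have cond: "\<forall>t<1/2. card {u\<in>S. f u \<le> t} \<le> card {v\<in>T. f v \<ge> 1 - t}"
  proof (intro allI impI)
    fix t :: real assume t: "t < 1/2"
    have e1: "{u\<in>S. f u \<le> t} = {u\<in>V. f u \<le> t}" unfolding S_def using t by auto
    have e2: "{v\<in>T. f v \<ge> 1 - t} = {v\<in>V. 1 - t \<le> f v}" unfolding T_def using t by auto
    have "k * card {u\<in>V. f u \<le> t} \<le> 2 * card E' + k * card {v\<in>V. 1 - t \<le> f v}"
      using count_lemma[OF sg reg sub fvc t] by simp
    then have "k * card {u\<in>V. f u \<le> t} < k * (card {v\<in>V. 1 - t \<le> f v} + 1)"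
      using m by simp
    then have "card {u\<in>V. f u \<le> t} < card {v\<in>V. 1 - t \<le> f v} + 1"
      using mult_less_cancel1 by blast
    then show "card {u\<in>S. f u \<le> t} \<le> card {v\<in>T. f v \<ge> 1 - t}" using e1 e2 by simp
  qed
  have "sum f (S \<union> T) \<ge> (real (card S) + real (card T)) / 2"
    by (rule pair_lemma) (use finV cond in \<open>auto simp: S_def T_def\<close>)
  moreover have "S \<union> T = V" unfolding S_def T_def by auto
  moreover have "card V = card S + card T"
  proof -
    have "card (S \<union> T) = card S + card T"
      by (rule card_Un_disjoint) (use finV in \<open>auto simp: S_def T_def\<close>)
    then show ?thesis using \<open>S \<union> T = V\<close> by simp
  qed
  ultimately show ?thesis by simp
qed

lemma tau_bound:
  assumes sg: "simple_graph V E" and reg: "regular V E k" and sub: "E' \<subseteq> E"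
    and m: "2 * card E' < k"
  shows "tau_star V (E - E') \<ge> real (card V) / 2"
  unfolding tau_star_def
proof (rule cInf_greatest)
  have "frac_vertex_cover V (E - E') (\<lambda>_. 1)" unfolding frac_vertex_cover_def by auto
  then show "{(\<Sum>v\<in>V. f v) | f. frac_vertex_cover V (E - E') f} \<noteq> {}" by blast
next
  fix x assume "x \<in> {(\<Sum>v\<in>V. f v) | f. frac_vertex_cover V (E - E') f}"
  then obtain f where "x = sum f V" "frac_vertex_cover V (E - E') f" by auto
  then show "real (card V) / 2 \<le> x" using cover_bound[OF sg reg sub _ m] by simp
qed

theorem lemma23:
  fixes V :: "'a set" and E :: "'a set set" and k :: nat
  assumes "simple_graph V E" and "V \<noteq> {}" and "regular V E k"
  shows "real (mu V E) \<ge> real k / 2"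
proof -
  define M where "M = {card E' | E'. E' \<subseteq> E \<and> tau_star V (E - E') < real (card V) / 2}"
  have finV: "finite V" using assms(1) unfolding simple_graph_def by auto
  have "tau_star V (E - E) < real (card V) / 2"
  proof -
    have "tau_star V (E - E) \<le> sum (\<lambda>_. 0) V"
      unfolding tau_star_def
    proof (rule cInf_lower)
      show "sum (\<lambda>_. 0) V \<in> {(\<Sum>v\<in>V. f v) | f. frac_vertex_cover V (E - E) f}"
        unfolding frac_vertex_cover_def by (rule CollectI, rule exI[of _ "\<lambda>_. 0"]) auto
      show "bdd_below {(\<Sum>v\<in>V. f v) | f. frac_vertex_cover V (E - E) f}"
        unfolding bdd_below_def frac_vertex_cover_def
        by (rule exI[of _ 0]) (auto intro: sum_nonneg)
    qed
    moreover have "card V > 0" using finV assms(2) by (simp add: card_gt_0_iff)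
    ultimately show ?thesis by simp
  qed
  then have "M \<noteq> {}" unfolding M_def by blast
  then have "Inf M \<in> M" by (rule Inf_nat_def1)
  then obtain E' where E': "mu V E = card E'" "E' \<subseteq> E" "tau_star V (E - E') < real (card V) / 2"
    unfolding M_def mu_def by auto
  show ?thesis
  proof (rule ccontr)
    assume "\<not> ?thesis"
    then have "2 * card E' < k" using E'(1) by linarith
    then have "tau_star V (E - E') \<ge> real (card V) / 2" using tau_bound[OF assms(1) assms(3) E'(2)] by simp
    then show False using E'(3) by simp
  qed
qed

end
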